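(* Let $(\pi_1,S_1,T_1,W_1)$ be a linearly minimal homomorphism dilation system of a linear system $(\varphi,\mathcal A,V)$, and let $(\pi_c,S_c,T_c,W_c)$ be the canonical dilation. (i) If $\ker S_1$ contains no nonzero $\pi_1(\mathcal A)$-invariant subspace, then $(\pi_1,S_1,T_1,W_1)$ is equivalent to the canonical dilation. (ii) If $\dim W_1<\infty$ and $\pi_1$ is equivalent to $\pi_c$, in the sense that there is a bijective linear map $R:W_1\to W_c$ with $\pi_c(a)R=R\pi_1(a)$ for all $a\in\mathcal A$, then $\ker S_1$ contains no nonzero $\pi_1(\mathcal A)$-invariant subspace.
   Context: Fix a field $\mathbb F$; all algebras and vector spaces are over $\mathbb F$, and $L(X)$ is the algebra of linear maps $X\to X$. A linear system $(\varphi,\mathcal A,V)$: $\mathcal A$ a unital associative algebra with unit $I$, $V$ a vector space, $\varphi:\mathcal A\to L(V)$ linear with $\varphi(I)=\mathrm{id}_V$. A homomorphism dilation system $(\pi,S,T,W)$: $W$ a vector space, $\pi:\mathcal A\to L(W)$ a unital homomorphism, $T:V\to W$ injective linear, $S:W\to V$ surjective linear, $\varphi(a)=S\pi(a)T$ for all $a$. It is linearly minimal if $W=\mathrm{span}\{\pi(a)Tv\}$. Two linearly minimal systems are equivalent if there is a bijective linear $R:W_1\to W_2$ with $RT_1=T_2$, $S_2R=S_1$, $\pi_1(a)=R^{-1}\pi_2(a)R$ for all $a$. Canonical dilation: $\alpha_{a,x}\in L(\mathcal A,V)$, $\alpha_{a,x}(b)=\varphi(ba)x$; $W_c=\mathrm{span}\{\alpha_{a,x}:a\in\mathcal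 A,x\in V\}$; $\pi_c(a)\alpha_{b,x}=\alpha_{ab,x}$; $T_cx=\alpha_{I,x}$; $S_c(\alpha_{a,x})=\varphi(a)x$. *)

theory Defs
  imports Complex_Main "HOL-Library.Function_Algebras"
begin

(* A vector space is a type with
   ab_group_add structure together with a scalar multiplication satisfying
   the library locale vector_space. *)

definition unital_algebra :: "('f::field \<Rightarrow> 'a::ring_1 \<Rightarrow> 'a) \<Rightarrow> bool" where
  "unital_algebra sA \<longleftrightarrow> vector_space sA \<and>
     (\<forall>c x y. sA c (x * y) = sA c x * y \<and> sA c (x * y) = x * sA c y)"

definition linear_system ::
  "('f::field \<Rightarrow> 'a::ring_1 \<Rightarrow> 'a) \<Rightarrow> ('f \<Rightarrow> 'v::ab_group_add \<Rightarrow> 'v) \<Rightarrow> ('a \<Rightarrow> 'v \<Rightarrow> 'v) \<Rightarrow> bool" where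
  "linear_system sA sV \<phi> \<longleftrightarrow> unital_algebra sA \<and> vector_space sV \<and>
     (\<forall>a. Vector_Spaces.linear sV sV (\<phi> a)) \<and>
     (\<forall>a b x. \<phi> (a + b) x = \<phi> a x + \<phi> b x) \<and>
     (\<forall>c a x. \<phi> (sA c a) x = sV c (\<phi> a x)) \<and>
     \<phi> 1 = id"

definition hom_dilation_system ::
  "('f::field \<Rightarrow> 'a::ring_1 \<Rightarrow> 'a) \<Rightarrow> ('f \<Rightarrow> 'v::ab_group_add \<Rightarrow> 'v) \<Rightarrow> ('a \<Rightarrow> 'v \<Rightarrow> 'v)
   \<Rightarrow> ('f \<Rightarrow> 'w::ab_group_add \<Rightarrow> 'w) \<Rightarrow> ('a \<Rightarrow> 'w \<Rightarrow> 'w) \<Rightarrow> ('w \<Rightarrow> 'v) \<Rightarrow> ('v \<Rightarrow> 'w) \<Rightarrow> bool" where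
  "hom_dilation_system sA sV \<phi> sW \<pi> S T \<longleftrightarrow>
     linear_system sA sV \<phi> \<and> vector_space sW \<and>
     (\<forall>a. Vector_Spaces.linear sW sW (\<pi> a)) \<and>
     (\<forall>a b w. \<pi> (a + b) w = \<pi> a w + \<pi> b w) \<and>
     (\<forall>c a w. \<pi> (sA c a) w = sW c (\<pi> a w)) \<and>
     (\<forall>a b. \<pi> (a * b) = \<pi> a \<circ> \<pi> b) \<and>
     \<pi> 1 = id \<and>
     Vector_Spaces.linear sV sW T \<and> inj T \<and>
     Vector_Spaces.linear sW sV S \<and> surj S \<and>
     (\<forall>a. \<phi> a = S \<circ> \<pi> a \<circ> T)"

definition linearly_minimal ::
  "('f::field \<Rightarrow> 'w::ab_group_add \<Rightarrow> 'w) \<Rightarrow> ('a \<Rightarrow> 'w \<Rightarrow> 'w) \<Rightarrow> ('v \<Rightarrow> 'w) \<Rightarrow> bool" where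
  "linearly_minimal sW \<pi> T \<longleftrightarrow> module.span sW {\<pi> a (T v) | a v. True} = UNIV"

(* The canonical dilation.  L(A,V) is represented inside the space of all
   functions 'a => 'v with pointwise operations. *)
definition fun_scale :: "('f \<Rightarrow> 'v \<Rightarrow> 'v) \<Rightarrow> 'f \<Rightarrow> ('a \<Rightarrow> 'v) \<Rightarrow> ('a \<Rightarrow> 'v)" where
  "fun_scale sV c f = (\<lambda>b. sV c (f b))"

definition alpha :: "('a::ring_1 \<Rightarrow> 'v \<Rightarrow> 'v) \<Rightarrow> 'a \<Rightarrow> 'v \<Rightarrow> ('a \<Rightarrow> 'v)" where
  "alpha \<phi> a x = (\<lambda>b. \<phi> (b * a) x)"

definition W_c :: "('f::field \<Rightarrow> 'v::ab_group_add \<Rightarrow> 'v) \<Rightarrow> ('a::ring_1 \<Rightarrow> 'v \<Rightarrow> 'v) \<Rightarrow> ('a \<Rightarrow> 'v) set" where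
  "W_c sV \<phi> = module.span (fun_scale sV) {alpha \<phi> a x | a x. True}"

(* pi_c(a) alpha_{b,x} = alpha_{ab,x}; on W_c this is f |-> (c |-> f (c * a)) *)
definition pi_c :: "'a::ring_1 \<Rightarrow> ('a \<Rightarrow> 'v) \<Rightarrow> ('a \<Rightarrow> 'v)" where
  "pi_c a f = (\<lambda>c. f (c * a))"

definition T_c :: "('a::ring_1 \<Rightarrow> 'v \<Rightarrow> 'v) \<Rightarrow> 'v \<Rightarrow> ('a \<Rightarrow> 'v)" where
  "T_c \<phi> x = alpha \<phi> 1 x"

(* S_c alpha_{a,x} = phi(a) x = alpha_{a,x}(I); on W_c this is f |-> f I *)
definition S_c :: "('a::ring_1 \<Rightarrow> 'v) \<Rightarrow> 'v" where
  "S_c f = f 1"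

definition equivalent_to_canonical ::
  "('f::field \<Rightarrow> 'v::ab_group_add \<Rightarrow> 'v) \<Rightarrow> ('a::ring_1 \<Rightarrow> 'v \<Rightarrow> 'v)
   \<Rightarrow> ('f \<Rightarrow> 'w::ab_group_add \<Rightarrow> 'w) \<Rightarrow> ('a \<Rightarrow> 'w \<Rightarrow> 'w) \<Rightarrow> ('w \<Rightarrow> 'v) \<Rightarrow> ('v \<Rightarrow> 'w) \<Rightarrow> bool" where
  "equivalent_to_canonical sV \<phi> sW \<pi> S T \<longleftrightarrow>
     (\<exists>R. Vector_Spaces.linear sW (fun_scale sV) R \<and> bij_betw R UNIV (W_c sV \<phi>) \<and>
          (\<forall>v. R (T v) = T_c \<phi> v) \<and>
          (\<forall>w. S_c (R w) = S w) \<and>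
          (\<forall>a w. \<pi> a w = inv_into UNIV R (pi_c a (R w))))"

definition rep_equivalent_to_canonical ::
  "('f::field \<Rightarrow> 'v::ab_group_add \<Rightarrow> 'v) \<Rightarrow> ('a::ring_1 \<Rightarrow> 'v \<Rightarrow> 'v)
   \<Rightarrow> ('f \<Rightarrow> 'w::ab_group_add \<Rightarrow> 'w) \<Rightarrow> ('a \<Rightarrow> 'w \<Rightarrow> 'w) \<Rightarrow> bool" where
  "rep_equivalent_to_canonical sV \<phi> sW \<pi> \<longleftrightarrow>
     (\<exists>R. Vector_Spaces.linear sW (fun_scale sV) R \<and> bij_betw R UNIV (W_c sV \<phi>) \<and>
          (\<forall>a w. pi_c a (R w) = R (\<pi> a w)))"

definition no_invariant_subspace_in_kernel ::
  "('f::field \<Rightarrow> 'w::ab_group_add \<Rightarrow> 'w) \<Rightarrow> ('a \<Rightarrow> 'w \<Rightarrow> 'w) \<Rightarrow> ('w \<Rightarrow> 'v::zero) \<Rightarrow> bool" where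
  "no_invariant_subspace_in_kernel sW \<pi> S \<longleftrightarrow>
     (\<forall>U. module.subspace sW U \<and> U \<subseteq> {w. S w = 0} \<and> (\<forall>a. \<pi> a ` U \<subseteq> U) \<longrightarrow> U = {0})"

end

theory Submission
  imports Defs
begin

lemma fun_scale_vs:
  assumes "vector_space sV"
  shows "vector_space (fun_scale sV :: 'f::field \<Rightarrow> ('a \<Rightarrow> 'v::ab_group_add) \<Rightarrow> _)"
proof -
  interpret V: vector_space sV by fact
  show ?thesis
    by unfold_locales (auto simp: fun_scale_def fun_eq_iff V.scale_right_distrib
        V.scale_left_distrib)
qed

theorem corollary3p5:
  fixes sA :: "'f::field \<Rightarrow> 'a::ring_1 \<Rightarrow> 'a"
    and sV :: "'f \<Rightarrow> 'v::ab_group_add \<Rightarrow> 'v"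
    and sW :: "'f \<Rightarrow> 'w::ab_group_add \<Rightarrow> 'w"
    and \<phi> :: "'a \<Rightarrow> 'v \<Rightarrow> 'v"
    and \<pi>1 :: "'a \<Rightarrow> 'w \<Rightarrow> 'w"
    and S1 :: "'w \<Rightarrow> 'v"
    and T1 :: "'v \<Rightarrow> 'w"
  assumes "hom_dilation_system sA sV \<phi> sW \<pi>1 S1 T1"
    and "linearly_minimal sW \<pi>1 T1"
  shows "(no_invariant_subspace_in_kernel sW \<pi>1 S1 \<longrightarrow>
            equivalent_to_canonical sV \<phi> sW \<pi>1 S1 T1)
       \<and> ((\<exists>B. finite_dimensional_vector_space sW B) \<and>
            rep_equivalent_to_canonical sV \<phi> sW \<pi>1 \<longrightarrow>
            no_invariant_subspace_in_kernel sW \<pi>1 S1)"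
proof -
  have H: "linear_system sA sV \<phi>" "vector_space sW" "\<And>a. Vector_Spaces.linear sW sW (\<pi>1 a)"
    "\<And>a b. \<pi>1 (a * b) = \<pi>1 a \<circ> \<pi>1 b" "\<pi>1 1 = id" "Vector_Spaces.linear sW sV S1"
    "\<And>a. \<phi> a = S1 \<circ> \<pi>1 a \<circ> T1"
    using assms(1) unfolding hom_dilation_system_def by auto
  have vV: "vector_space sV" using H(1) unfolding linear_system_def by auto
  have vF: "vector_space (fun_scale sV :: 'f \<Rightarrow> ('a \<Rightarrow> 'v) \<Rightarrow> _)" by (rule fun_scale_vs[OF vV])
  define Q where "Q = (\<lambda>w b. S1 (\<pi>1 b w))"
  have linQ: "Vector_Spaces.linear sW (fun_scale sV) Q"
    unfolding Vector_Spaces.linear_iff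
  proof (intro conjI allI)
    show "vector_space sW" by fact
    show "vector_space (fun_scale sV :: 'f \<Rightarrow> ('a \<Rightarrow> 'v) \<Rightarrow> _)" by fact
    fix x y show "Q (x + y) = Q x + Q y"
      using H(3,6) by (auto simp: Q_def fun_eq_iff Vector_Spaces.linear_iff)
  next
    fix c x show "Q (sW c x) = fun_scale sV c (Q x)"
      using H(3,6) by (auto simp: Q_def fun_eq_iff Vector_Spaces.linear_iff fun_scale_def)
  qed
  interpret LQ: Vector_Spaces.linear sW "fun_scale sV" Q by (rule linQ)
  have QG: "Q ` {\<pi>1 a (T1 v) | a v. True} = {alpha \<phi> a x | a x. True}"
  proof -
    have QA: "Q (\<pi>1 a (T1 v)) = alpha \<phi> a v" for a v
      using H(4,7) by (auto simp: Q_def alpha_def fun_eq_iff)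
    then show ?thesis
    proof (intro equalityI subsetI)
      fix y assume "y \<in> Q ` {\<pi>1 a (T1 v) | a v. True}"
      with QA show "y \<in> {alpha \<phi> a x | a x. True}" by auto
    next
      fix y assume "y \<in> {alpha \<phi> a x | a x. True}"
      then obtain a x where "y = alpha \<phi> a x" by blast
      with QA have "y = Q (\<pi>1 a (T1 x))" by simp
      then show "y \<in> Q ` {\<pi>1 a (T1 v) | a v. True}" by blast
    qed
  qed
  have imQ: "Q ` UNIV = W_c sV \<phi>"
  proof -
    have "module.span sW {\<pi>1 a (T1 v) | a v. True} = UNIV"
      using assms(2) unfolding linearly_minimal_def .
    then have "Q ` UNIV = Q ` module.span sW {\<pi>1 a (T1 v) | a v. True}" by simp
    also have "\<dots> = module.span (fun_scale sV) (Q ` {\<pi>1 a (T1 v) | a v. True})"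
      by (rule LQ.span_image[symmetric])
    finally show ?thesis unfolding QG W_c_def .
  qed
  have Qinv: "Q (\<pi>1 a w) = pi_c a (Q w)" for a w
    using H(4) by (auto simp: Q_def pi_c_def fun_eq_iff)
  have kerQ: "Q w = 0 \<Longrightarrow> S1 (\<pi>1 b w) = 0" for w b
    by (auto simp: Q_def fun_eq_iff dest: fun_cong[where x=b])
  have inv_sub: "U \<subseteq> {w. Q w = 0}"
    if "U \<subseteq> {w. S1 w = 0}" "\<forall>a. \<pi>1 a ` U \<subseteq> U" for U
    using that by (auto simp: Q_def fun_eq_iff)
  have part1: "equivalent_to_canonical sV \<phi> sW \<pi>1 S1 T1"
    if N: "no_invariant_subspace_in_kernel sW \<pi>1 S1"
  proof -
    let ?K = "{w. Q w = 0}"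
    have sK: "module.subspace sW ?K"
      by (rule LQ.subspace_kernel)
    have "?K \<subseteq> {w. S1 w = 0}"
      using kerQ[of _ 1] H(5) by auto
    moreover have "\<forall>a. \<pi>1 a ` ?K \<subseteq> ?K" using Qinv by (auto simp: pi_c_def)
    ultimately have K0: "?K = {0}" using N sK unfolding no_invariant_subspace_in_kernel_def by blast
    have injQ: "inj Q"
      using K0 LQ.inj_iff_eq_0 by blast
    show ?thesis unfolding equivalent_to_canonical_def
    proof (intro exI conjI allI)
      show "Vector_Spaces.linear sW (fun_scale sV) Q" by fact
      show "bij_betw Q UNIV (W_c sV \<phi>)" using injQ imQ by (simp add: bij_betw_def)
      fix v show "Q (T1 v) = T_c \<phi> v"
        using H(7) by (auto simp: Q_def T_c_def alpha_def fun_eq_iff)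
    next
      fix w show "S_c (Q w) = S1 w" using H(5) by (simp add: S_c_def Q_def)
    next
      fix a w show "\<pi>1 a w = inv_into UNIV Q (pi_c a (Q w))"
        using injQ by (simp add: Qinv[symmetric])
    qed
  qed
  have part2: "no_invariant_subspace_in_kernel sW \<pi>1 S1"
    if B: "finite_dimensional_vector_space sW B"
      and R: "rep_equivalent_to_canonical sV \<phi> sW \<pi>1" for B
  proof -
    obtain R where lR: "Vector_Spaces.linear sW (fun_scale sV) R"
      and bR: "bij_betw R UNIV (W_c sV \<phi>)"
      using R unfolding rep_equivalent_to_canonical_def by blast
    interpret LR: Vector_Spaces.linear sW "fun_scale sV" R by (rule lR)
    have iR: "inj R" and rR: "R ` UNIV = W_c sV \<phi>" using bR by (auto simp: bij_betw_def)
    define g where "g = inv_into UNIV R \<circ> Q"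
    have Rg: "R (g x) = Q x" for x
    proof -
      have "Q x \<in> range R" using imQ rR by blast
      then show ?thesis by (simp add: g_def f_inv_into_f)
    qed
    have lg: "Vector_Spaces.linear sW sW g"
      unfolding Vector_Spaces.linear_iff
    proof (intro conjI allI)
      show "vector_space sW" by fact
      show "vector_space sW" by fact
      fix x y show "g (x + y) = g x + g y"
      proof -
        have "R (g (x + y)) = R (g x + g y)" by (simp add: Rg LQ.add LR.add)
        with iR show ?thesis by (rule injD)
      qed
    next
      fix c x show "g (sW c x) = sW c (g x)"
      proof -
        have "R (g (sW c x)) = R (sW c (g x))" by (simp add: Rg LQ.scale LR.scale)
        with iR show ?thesis by (rule injD)
      qed
    qed
    have sg: "surj g"
    proof -
      have "y \<in> range g" for y
      proof -
        have "R y \<in> range Q" using imQ rR by blast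
        then have "Q (inv_into UNIV Q (R y)) = R y" by (simp add: f_inv_into_f)
        then have "R (g (inv_into UNIV Q (R y))) = R y" by (simp add: Rg)
        with iR have "g (inv_into UNIV Q (R y)) = y" by (rule injD)
        then show ?thesis by (metis rangeI)
      qed
      then show ?thesis by blast
    qed
    interpret FD: finite_dimensional_vector_space_pair sW B sW B
      using B by (simp add: finite_dimensional_vector_space_pair_def)
    have "inj g" using FD.linear_surjective_imp_injective[OF lg sg] by simp
    then have injQ: "inj Q" unfolding g_def by (rule inj_on_imageI2)
    show ?thesis unfolding no_invariant_subspace_in_kernel_def
    proof (intro allI impI)
      fix U assume U: "module.subspace sW U \<and> U \<subseteq> {w. S1 w = 0} \<and> (\<forall>a. \<pi>1 a ` U \<subseteq> U)"
      then have "U \<subseteq> {w. Q w = 0}" using inv_sub by blast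
      moreover have "0 \<in> U" using U LQ.vs1.subspace_0 by blast
      ultimately show "U = {0}" using injQ LQ.inj_iff_eq_0 by blast
    qed
  qed
  show ?thesis using part1 part2 by blast
qed

end
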